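(* Let $0<b\le 0.01$ and let $(x_3,x,x,y_3,y,y)$ with $x_3,y_3,x,y>0$ be a point of the curve of equilibria $\mathcal C$. Let $$M=\begin{pmatrix}-x_3(1-y_3)-y_3(1-x_3)-4xy & -4y & -4x\\ x(y_3+y)/2 & -bx_3/x & x\\ y(x_3+x)/2 & y & -by_3/y\end{pmatrix}=(m_{ij}),$$ and $b_2=(m_{11}m_{22}-m_{12}m_{21})+(m_{22}m_{33}-m_{23}m_{32})+(m_{11}m_{33}-m_{13}m_{31})$. Then $\det(M)>b_2\,\mathrm{trace}(M)$.
   Context: Haploid unlinked subfunctionalization model with mutation rate $b$, $\alpha=1-3b$, $w=x_3+y_3-x_3y_3+x_1y_2+x_2y_1$, vector field $F$: $F_{x_3}=x_3(\alpha-w)$; $F_{x_2}=-x_2w+x_2(y_3+y_1)+bx_3-2bx_2$; $F_{x_1}=-x_1w+x_1(y_3+y_2)+bx_3-2bx_1$; $F_{y_3}=y_3(\alpha-w)$; $F_{y_2}=-y_2w+y_2(x_3+x_1)+by_3-2by_2$; $F_{y_1}=-y_1w+y_1(x_3+x_2)+by_3-2by_1$. The curve of equilibria $\mathcal C$ is the one-parameter family of fixed points of $dz/dt=F(z)$ with $x_1=x_2=x$, $y_1=y_2=y$, parametrized by $x_3$ via $y_3=\frac{-d_1+\sqrt{d_1^2-4d_0d_2}}{2d_2}$ with $d_2=-(1-x_3)^2$, $d_1=2(1-x_3)^2-4b(1-x_3)+2b^2(1+x_3)$, $d_0=-(1-x_3)^2+4b(1-x_3)-b^2(5-2x_3)+b^3$,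 and $x=\frac{\Gamma-2bx_3}{2(y_3-\beta)}$, $y=\frac{\Gamma-2by_3}{2(x_3-\beta)}$, $\beta=1-b$, $\Gamma=x_3+y_3-x_3y_3-\alpha$. *)

theory Defs
  imports "HOL-Analysis.Analysis"
begin

text \<open>Haploid unlinked subfunctionalization model, mutation rate b.
  State z = (x3, x2, x1, y3, y2, y1).\<close>

definition alpha :: "real \<Rightarrow> real" where
  "alpha b = 1 - 3 * b"

definition wfit :: "real \<Rightarrow> real \<Rightarrow> real \<Rightarrow> real \<Rightarrow> real \<Rightarrow> real \<Rightarrow> real" where
  "wfit x3 x2 x1 y3 y2 y1 = x3 + y3 - x3 * y3 + x1 * y2 + x2 * y1"

definition Fvec :: "real \<Rightarrow> real \<Rightarrow> real \<Rightarrow> real \<Rightarrow> real \<Rightarrow> real \<Rightarrow> real \<Rightarrow> real list" where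
  "Fvec b x3 x2 x1 y3 y2 y1 =
    (let w = wfit x3 x2 x1 y3 y2 y1 in
     [ x3 * (alpha b - w),
       - x2 * w + x2 * (y3 + y1) + b * x3 - 2 * b * x2,
       - x1 * w + x1 * (y3 + y2) + b * x3 - 2 * b * x1,
       y3 * (alpha b - w),
       - y2 * w + y2 * (x3 + x1) + b * y3 - 2 * b * y2,
       - y1 * w + y1 * (x3 + x2) + b * y3 - 2 * b * y1 ])"

definition is_fixed_point :: "real \<Rightarrow> real \<Rightarrow> real \<Rightarrow> real \<Rightarrow> real \<Rightarrow> real \<Rightarrow> real \<Rightarrow> bool" where
  "is_fixed_point b x3 x2 x1 y3 y2 y1 \<longleftrightarrow> (\<forall>c \<in> set (Fvec b x3 x2 x1 y3 y2 y1). c = 0)"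

text \<open>Parametrization of the curve of equilibria by x3.\<close>
definition cd2 :: "real \<Rightarrow> real \<Rightarrow> real" where
  "cd2 b x3 = - ((1 - x3) ^ 2)"
definition cd1 :: "real \<Rightarrow> real \<Rightarrow> real" where
  "cd1 b x3 = 2 * (1 - x3) ^ 2 - 4 * b * (1 - x3) + 2 * b ^ 2 * (1 + x3)"
definition cd0 :: "real \<Rightarrow> real \<Rightarrow> real" where
  "cd0 b x3 = - ((1 - x3) ^ 2) + 4 * b * (1 - x3) - b ^ 2 * (5 - 2 * x3) + b ^ 3"

definition disc :: "real \<Rightarrow> real \<Rightarrow> real" where
  "disc b x3 = (cd1 b x3) ^ 2 - 4 * cd0 b x3 * cd2 b x3"

definition y3_of :: "real \<Rightarrow> real \<Rightarrow> real" where
  "y3_of b x3 = (- cd1 b x3 + sqrt (disc b x3)) / (2 * cd2 b x3)"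

definition Gamma :: "real \<Rightarrow> real \<Rightarrow> real \<Rightarrow> real" where
  "Gamma b x3 y3 = x3 + y3 - x3 * y3 - alpha b"

definition x_of :: "real \<Rightarrow> real \<Rightarrow> real" where
  "x_of b x3 = (let y3 = y3_of b x3 in (Gamma b x3 y3 - 2 * b * x3) / (2 * (y3 - (1 - b))))"

definition y_of :: "real \<Rightarrow> real \<Rightarrow> real" where
  "y_of b x3 = (let y3 = y3_of b x3 in (Gamma b x3 y3 - 2 * b * y3) / (2 * (x3 - (1 - b))))"

definition on_curve_C :: "real \<Rightarrow> real \<Rightarrow> real \<Rightarrow> real \<Rightarrow> real \<Rightarrow> bool" where
  "on_curve_C b x3 x y3 y \<longleftrightarrow>
     is_fixed_point b x3 x x y3 y y \<and>
     disc b x3 \<ge> 0 \<and> cd2 b x3 \<noteq> 0 \<and>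
     y3 \<noteq> 1 - b \<and> x3 \<noteq> 1 - b \<and>
     y3 = y3_of b x3 \<and> x = x_of b x3 \<and> y = y_of b x3"

definition Mmat :: "real \<Rightarrow> real \<Rightarrow> real \<Rightarrow> real \<Rightarrow> real \<Rightarrow> real^3^3" where
  "Mmat b x3 x y3 y = vector [
     vector [- x3 * (1 - y3) - y3 * (1 - x3) - 4 * x * y, - 4 * y, - 4 * x],
     vector [x * (y3 + y) / 2, - b * x3 / x, x],
     vector [y * (x3 + x) / 2, y, - b * y3 / y]]"

definition b2_coef :: "real^3^3 \<Rightarrow> real" where
  "b2_coef M = (M$1$1 * M$2$2 - M$1$2 * M$2$1) + (M$2$2 * M$3$3 - M$2$3 * M$3$2)
              + (M$1$1 * M$3$3 - M$1$3 * M$3$1)"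

end

theory Submission
  imports Defs
begin

lemma gpos:
  fixes b x3 x y3 y A B :: real
  assumes "0 < b" "b \<le> 0.01" "x3 > 0" "y3 > 0" "x > 0" "y > 0"
   and E1: "x3 + y3 - x3*y3 + 2*x*y = 1 - 3*b"
   and A: "A = b * x3 / x" and A': "A = 1 - b - y3 - y"
   and B: "B = b * y3 / y" and B': "B = 1 - b - x3 - x"
   and Apos: "A > 0" and Bpos: "B > 0"
  shows "B + 2*A + y - 4*b > 0"
proof (cases "y \<ge> 4*b")
  case True then show ?thesis using Apos Bpos assms(1) by linarith
next
  case False
  show ?thesis
  proof (cases "y3 \<ge> 16*b")
    case True
    have "b * y3 \<ge> b * (16*b)" using True assms(1) by simp
    moreover have "b*(16*b) > 4*b*y" using False assms by simp
    ultimately have "b*y3 > 4*b*y" by linarith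
    hence "B > 4*b" unfolding B using assms(6) by (simp add: field_simps)
    then show ?thesis using Apos assms(6) by linarith
  next
    case False2: False
    have x1: "x < 1" using Bpos B' assms by linarith
    have st: "(1-x3)*(1-y3) = 3*b + 2*x*y" using E1 by (simp add: algebra_simps)
    have "x*y \<le> 1 * (4*b)" using mult_mono[of x 1 y "4*b"] less_imp_le[OF x1] False assms(6) by simp
    hence st2: "(1-x3)*(1-y3) \<le> 11*b" using st by linarith
    have x3l: "x3 < 1" using Bpos B' assms by linarith
    have "(1-x3)*(84/100) \<le> (1-x3)*(1-y3)" using False2 assms x3l by (intro mult_left_mono) auto
    hence s: "1 - x3 < 131/10*b" using st2 assms(1) by argo
    have "x < 121/10 * b" using s Bpos B' by linarith
    hence "4*x < x3" using s assms(2) by (simp add: power2_eq_square)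
    hence "b*x3 > b*(4*x)" using assms(1) by simp
    hence "A > 4*b" unfolding A using assms(5) by (simp add: field_simps)
    then show ?thesis using Bpos assms(1,6) by linarith
  qed
qed

lemma key_identity:
  fixes P A B x y uu vv :: real
  defines "M \<equiv> vector [vector [- P, - 4 * y, - 4 * x], vector [uu, - A, x], vector [vv, y, - B]] :: real^3^3"
  shows "det M - b2_coef M * trace M
     = (P+A)*(A+B)*(B+P) - (A+B)*x*y + 4*y*uu*(P+A-x) + 4 * x * vv * (P+B-y)"
  unfolding M_def b2_coef_def trace_def det_3 sum_3 by (simp add: algebra_simps)

theorem lemma3:
  fixes b x3 x y3 y :: real
  assumes "0 < b" and "b \<le> 0.01"
    and "x3 > 0" and "y3 > 0" and "x > 0" and "y > 0"
    and "on_curve_C b x3 x y3 y"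
  shows "det (Mmat b x3 x y3 y) > b2_coef (Mmat b x3 x y3 y) * trace (Mmat b x3 x y3 y)"
proof -
  have fp: "is_fixed_point b x3 x x y3 y y" using assms(7) unfolding on_curve_C_def by blast
  define w where "w = x3 + y3 - x3 * y3 + x * y + x * y"
  have e0: "x3 * (1 - 3*b - w) = 0"
    and e2: "- x * w + x * (y3 + y) + b * x3 - 2 * b * x = 0"
    and e5: "- y * w + y * (x3 + x) + b * y3 - 2 * b * y = 0"
    using fp unfolding is_fixed_point_def Fvec_def Let_def wfit_def alpha_def w_def
    by (auto simp: algebra_simps)
  have E1: "x3 + y3 - x3*y3 + 2*x*y = 1 - 3*b" using e0 assms(3) unfolding w_def by simp
  have wv: "w = 1 - 3*b" using E1 unfolding w_def by simp
  have E2: "x * (1 - b - y3 - y) = b * x3" using e2 unfolding wv by (simp add: algebra_simps)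
  have E3: "y * (1 - b - x3 - x) = b * y3" using e5 unfolding wv by (simp add: algebra_simps)
  define A where "A = b * x3 / x"
  define B where "B = b * y3 / y"
  define P where "P = x3 * (1 - y3) + y3 * (1 - x3) + 4 * x * y"
  have A: "A = 1 - b - y3 - y" using E2 assms(5) unfolding A_def by (simp add: field_simps)
  have B: "B = 1 - b - x3 - x" using E3 assms(6) unfolding B_def by (simp add: field_simps)
  have Apos: "A > 0" unfolding A_def using assms by simp
  have Bpos: "B > 0" unfolding B_def using assms by simp
  have G: "P + A - x = B + 2*A + y - 4*b" using E1 A B unfolding P_def by (simp add: algebra_simps)
  have H: "P + B - y = A + 2*B + x - 4*b" using E1 A B unfolding P_def by (simp add: algebra_simps)
  have Gpos: "P + A - x > 0" unfolding G using gpos[OF assms(1-6) E1 A_def A B_def B Apos Bpos] .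
  have Hpos: "P + B - y > 0" unfolding H using gpos[OF assms(1,2,4,3,6,5) _ B_def _ A_def _ Bpos Apos] E1 A B by (simp add: algebra_simps)
  have M: "Mmat b x3 x y3 y = vector [vector [- P, - 4 * y, - 4 * x],
        vector [x * (y3 + y) / 2, - A, x], vector [y * (x3 + x) / 2, y, - B]]"
    unfolding Mmat_def P_def A_def B_def by (simp add: algebra_simps)
  have u: "x * (y3 + y) / 2 > 0" and v: "y * (x3 + x) / 2 > 0" using assms by auto
  have "(P+A)*(P+B) > x*y"
    using Gpos Hpos assms(5,6) by (metis add_pos_pos diff_gt_0_iff_gt mult_strict_mono' less_eq_real_def)
  hence "(A+B)*((P+A)*(P+B) - x*y) > 0" using Apos Bpos by simp
  moreover have "4*y*(x * (y3 + y) / 2)*(P+A-x) > 0" by (intro mult_pos_pos divide_pos_pos) (use assms Gpos in auto)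
  moreover have "4 * x * (y * (x3 + x) / 2)*(P+B-y) > 0" by (intro mult_pos_pos divide_pos_pos) (use assms Hpos in auto)
  moreover have "(P+A)*(A+B)*(B+P) - (A+B)*x*y = (A+B)*((P+A)*(P+B)-x*y)" by (simp add: algebra_simps)
  ultimately have "(P+A)*(A+B)*(B+P) - (A+B)*x*y + 4*y*(x * (y3 + y) / 2)*(P+A-x)
      + 4 * x * (y * (x3 + x) / 2)*(P+B-y) > 0"
    by linarith
  thus ?thesis unfolding M using key_identity[of P y x "x * (y3 + y) / 2" A "y * (x3 + x) / 2" B]
    by simp
qed

end
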